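(* For a space $X$ the following are equivalent: (1) $X$ is $L$-selective; (2) $X$ is $S_2$-selective; (3) $X$ is $S_\omega$-selective.
   Context: All spaces are assumed $T_1$. For spaces $Y$, $X$, a map $\varphi:Y\to\mathcal P(X)\setminus\{\emptyset\}$ is lower semicontinuous (l.s.c.) if $\{y:\varphi(y)\cap U\neq\emptyset\}$ is open in $Y$ for every open $U\subseteq X$; a selection is a map $f:Y\to X$ with $f(y)\in\varphi(y)$ for all $y$. $X$ is $Y$-selective if every l.s.c. map from $Y$ to the nonempty closed subsets of $X$ has a continuous selection; $L$-selective means $(\omega+1)$-selective, with $\omega+1$ carrying the order topology. The sequential fan $S_\omega$ is the quotient of the topological sum of countably many convergent sequences (with limits) obtained by identifying all limit points. Arens' space $S_2=\{x\}\cup\{x_n:n\in\omega\}\cup\{x_{n,m}:n,m\in\omega\}$: each $x_{n,m}$ is isolated; a neighborhood base at $x_n$ consists of the sets $\{x_n\}\cup\{x_{n,m}:m\in\omega\setminus K\}$, $K$ finite; a neighborhood base at $x$ consists of the sets $\{x\}\cup\{x_n:n\in\omega\setminus K\}\cup\{x_{n,m}:n\in\omega\setminus K,\ m>f(n)\}$ with $K$ finite and $f:\omega\to\omega$. *)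

theory Defs
  imports "HOL-Analysis.Analysis" "HOL-Library.Extended_Real"
begin

definition lsc_map :: "'b topology \<Rightarrow> 'a topology \<Rightarrow> ('b \<Rightarrow> 'a set) \<Rightarrow> bool" where
  "lsc_map Y X \<phi> \<longleftrightarrow>
     (\<forall>y\<in>topspace Y. \<phi> y \<subseteq> topspace X \<and> \<phi> y \<noteq> {}) \<and>
     (\<forall>U. openin X U \<longrightarrow> openin Y {y \<in> topspace Y. \<phi> y \<inter> U \<noteq> {}})"

definition selective :: "'b topology \<Rightarrow> 'a topology \<Rightarrow> bool" where
  "selective Y X \<longleftrightarrow>
     (\<forall>\<phi>. lsc_map Y X \<phi> \<and> (\<forall>y\<in>topspace Y. closedin X (\<phi> y)) \<longrightarrow>
        (\<exists>f. continuous_map Y X f \<and> (\<forall>y\<in>topspace Y. f y \<in> \<phi> y)))"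

text \<open>omega+1 with the order topology: enat with its (order) topology.\<close>
definition omega_plus_one :: "enat topology" where
  "omega_plus_one = euclidean"

definition L_selective :: "'a topology \<Rightarrow> bool" where
  "L_selective X \<longleftrightarrow> selective omega_plus_one X"

definition quotient_topology :: "'a topology \<Rightarrow> ('a \<Rightarrow> 'b) \<Rightarrow> 'b topology" where
  "quotient_topology T q = topology_generated_by
     {U. U \<subseteq> q ` topspace T \<and> openin T {x \<in> topspace T. q x \<in> U}}"

text \<open>Sequential fan: countably many copies of omega+1 (convergent sequences with limits),
  topological sum, all limit points identified (to (0, infinity)).\<close>
definition fan_quot :: "nat \<times> enat \<Rightarrow> nat \<times> enat" where
  "fan_quot p = (if snd p = \<infinity> then (0, \<infinity>) else p)"

definition S_omega :: "(nat \<times> enat) topology" where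
  "S_omega = quotient_topology (sum_topology (\<lambda>n. omega_plus_one) UNIV) fan_quot"

datatype S2pt = Xpt | Xn nat | Xnm nat nat

definition S2_nbhd_base :: "S2pt set set" where
  "S2_nbhd_base =
     {{Xnm n m} | n m. True} \<union>
     {insert (Xn n) {Xnm n m | m. m \<notin> K} | n K. finite K} \<union>
     {insert Xpt ({Xn n | n. n \<notin> K} \<union> {Xnm n m | n m. n \<notin> K \<and> m > f n}) | K f. finite K}"

definition S2 :: "S2pt topology" where
  "S2 = topology_generated_by S2_nbhd_base"

end

theory Submission
  imports Defs
begin


lemma enat_open_tail:
  fixes A :: "enat set"
  shows "open A \<longleftrightarrow> (\<infinity> \<in> A \<longrightarrow> (\<exists>N. \<forall>n\<ge>N. enat n \<in> A))"
proof
  assume "open A"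
  show "\<infinity> \<in> A \<longrightarrow> (\<exists>N. \<forall>n\<ge>N. enat n \<in> A)"
  proof
    assume "\<infinity> \<in> A"
    then obtain k :: nat where k: "{enat k<..} \<subseteq> A" using \<open>open A\<close> unfolding open_enat_iff by blast
    have "\<forall>n\<ge>Suc k. enat n \<in> A"
    proof (intro allI impI)
      fix n assume "n \<ge> Suc k"
      then have "enat n \<in> {enat k<..}" by simp
      then show "enat n \<in> A" using k by blast
    qed
    then show "\<exists>N. \<forall>n\<ge>N. enat n \<in> A" by blast
  qed
next
  assume H: "\<infinity> \<in> A \<longrightarrow> (\<exists>N. \<forall>n\<ge>N. enat n \<in> A)"
  show "open A" unfolding open_enat_iff
  proof
    assume "\<infinity> \<in> A"
    with H obtain N where N: "\<forall>n\<ge>N. enat n \<in> A" by blast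
    have "{enat N<..} \<subseteq> A"
    proof
      fix y assume "y \<in> {enat N<..}"
      then show "y \<in> A" using N \<open>\<infinity> \<in> A\<close> by (cases y) auto
    qed
    then show "\<exists>n::nat. {n<..} \<subseteq> A" by blast
  qed
qed

lemma cont_enat_iff:
  "continuous_map omega_plus_one X f \<longleftrightarrow>
    (\<forall>y. f y \<in> topspace X) \<and> (\<forall>U. openin X U \<longrightarrow> open {y. f y \<in> U})"
  unfolding continuous_map_def omega_plus_one_def by auto

lemma cont_enat_tail:
  assumes "continuous_map omega_plus_one X f" "openin X U" "f \<infinity> \<in> U"
  shows "\<exists>N. \<forall>n\<ge>N. f (enat n) \<in> U"
proof -
  have "open {y. f y \<in> U}" using assms cont_enat_iff by blast
  then show ?thesis using assms(3) unfolding enat_open_tail by auto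
qed

lemma lsc_enat_iff:
  "lsc_map omega_plus_one X \<phi> \<longleftrightarrow>
    (\<forall>y. \<phi> y \<subseteq> topspace X \<and> \<phi> y \<noteq> {}) \<and> (\<forall>U. openin X U \<longrightarrow> open {y. \<phi> y \<inter> U \<noteq> {}})"
  unfolding lsc_map_def omega_plus_one_def by auto

lemma L_sel_fixed:
  assumes T1: "t1_space X" and L: "L_selective X"
    and lsc: "lsc_map omega_plus_one X \<phi>"
    and cl: "\<And>y. closedin X (\<phi> y)"
    and p: "p \<in> \<phi> \<infinity>"
  shows "\<exists>f. continuous_map omega_plus_one X f \<and> (\<forall>y. f y \<in> \<phi> y) \<and> f \<infinity> = p"
proof -
  define \<psi> where "\<psi> = \<phi>(\<infinity> := {p})"
  have vals: "\<forall>y. \<phi> y \<subseteq> topspace X \<and> \<phi> y \<noteq> {}"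
   and op: "\<forall>U. openin X U \<longrightarrow> open {y. \<phi> y \<inter> U \<noteq> {}}" using lsc unfolding lsc_enat_iff by blast+
  have pX: "p \<in> topspace X" using vals p by blast
  have "lsc_map omega_plus_one X \<psi>"
    unfolding lsc_enat_iff
  proof (intro conjI allI impI)
    fix y show "\<psi> y \<subseteq> topspace X" "\<psi> y \<noteq> {}" using vals pX by (auto simp: \<psi>_def)
  next
    fix U assume U: "openin X U"
    have o: "open {y. \<phi> y \<inter> U \<noteq> {}}" using op U by blast
    show "open {y. \<psi> y \<inter> U \<noteq> {}}" unfolding enat_open_tail
    proof
      assume "\<infinity> \<in> {y. \<psi> y \<inter> U \<noteq> {}}"
      then have "p \<in> U" by (auto simp: \<psi>_def)
      then have "\<infinity> \<in> {y. \<phi> y \<inter> U \<noteq> {}}" using p by auto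
      then obtain N where "\<forall>n\<ge>N. enat n \<in> {y. \<phi> y \<inter> U \<noteq> {}}" using o unfolding enat_open_tail by blast
      then show "\<exists>N. \<forall>n\<ge>N. enat n \<in> {y. \<psi> y \<inter> U \<noteq> {}}" by (auto simp: \<psi>_def)
    qed
  qed
  moreover have "\<forall>y\<in>topspace omega_plus_one. closedin X (\<psi> y)"
  proof
    fix y
    have "closedin X {p}" using T1 pX t1_space_closedin_singleton by metis
    then show "closedin X (\<psi> y)" using cl[of y] by (simp add: \<psi>_def)
  qed
  ultimately have H1: "lsc_map omega_plus_one X \<psi> \<and> (\<forall>y\<in>topspace omega_plus_one. closedin X (\<psi> y))"
    by (rule conjI)
  have H2: "\<forall>\<phi>'. lsc_map omega_plus_one X \<phi>' \<and> (\<forall>y\<in>topspace omega_plus_one. closedin X (\<phi>' y)) \<longrightarrow>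
        (\<exists>f. continuous_map omega_plus_one X f \<and> (\<forall>y\<in>topspace omega_plus_one. f y \<in> \<phi>' y))"
    using L unfolding L_selective_def selective_def .
  have H3: "lsc_map omega_plus_one X \<psi> \<and> (\<forall>y\<in>topspace omega_plus_one. closedin X (\<psi> y)) \<longrightarrow>
        (\<exists>f. continuous_map omega_plus_one X f \<and> (\<forall>y\<in>topspace omega_plus_one. f y \<in> \<psi> y))"
    using H2 by (rule spec)
  obtain f where f: "continuous_map omega_plus_one X f"
      "\<forall>y\<in>topspace omega_plus_one. f y \<in> \<psi> y"
    using mp[OF H3 H1] by blast
  have fy: "f y \<in> \<psi> y" for y using f(2) by (simp add: omega_plus_one_def)
  have "f \<infinity> = p" using fy[of \<infinity>] by (simp add: \<psi>_def)
  moreover have "\<forall>y. f y \<in> \<phi> y"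
  proof
    fix y show "f y \<in> \<phi> y"
    proof (cases "y = \<infinity>")
      case True then show ?thesis using \<open>f \<infinity> = p\<close> p by simp
    next
      case False then show ?thesis using fy[of y] False by (simp add: \<psi>_def)
    qed
  qed
  ultimately show ?thesis using f(1) by blast
qed



definition Fam :: "(nat \<times> enat) set set" where
  "Fam = {U. U \<subseteq> fan_quot ` topspace (sum_topology (\<lambda>n. omega_plus_one) (UNIV::nat set)) \<and>
     openin (sum_topology (\<lambda>n. omega_plus_one) UNIV)
        {x \<in> topspace (sum_topology (\<lambda>n. omega_plus_one) UNIV). fan_quot x \<in> U}}"

lemma top_sum: "topspace (sum_topology (\<lambda>n. omega_plus_one) (UNIV::nat set)) = UNIV"
  by (auto simp: omega_plus_one_def)

lemma fq_k: "fan_quot (k, y) = (if y = \<infinity> then (0, \<infinity>) else (k, y))"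
  by (simp add: fan_quot_def)

lemma Fam_iff: "V \<in> Fam \<longleftrightarrow> V \<subseteq> range fan_quot \<and> (\<forall>k. open {y. fan_quot (k, y) \<in> V})"
  unfolding Fam_def top_sum openin_sum_topology
  by (auto simp: omega_plus_one_def)

lemma S_omega_eq: "S_omega = topology_generated_by Fam"
  unfolding S_omega_def quotient_topology_def Fam_def by simp

lemma S_omega_open_fwd:
  assumes "openin S_omega V" shows "open {y. fan_quot (k, y) \<in> V}"
proof -
  have "generate_topology_on Fam V" using assms unfolding S_omega_eq openin_topology_generated_by_iff .
  then show ?thesis
  proof (induction rule: generate_topology_on.induct)
    case Empty then show ?case by simp
  next
    case (Int a b)
    have "{y. fan_quot (k, y) \<in> a \<inter> b} = {y. fan_quot (k, y) \<in> a} \<inter> {y. fan_quot (k, y) \<in> b}" by auto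
    then show ?case using Int by (simp add: open_Int)
  next
    case (UN K)
    have "{y. fan_quot (k, y) \<in> \<Union>K} = (\<Union>V\<in>K. {y. fan_quot (k, y) \<in> V})" by auto
    then show ?case using UN by (simp add: open_UN)
  next
    case (Basis s) then show ?case using Fam_iff by blast
  qed
qed

lemma S_omega_open_bwd:
  assumes "V \<subseteq> range fan_quot" "\<And>k. open {y. fan_quot (k, y) \<in> V}"
  shows "openin S_omega V"
  unfolding S_omega_eq openin_topology_generated_by_iff
  by (rule generate_topology_on.Basis) (use assms Fam_iff in blast)

lemma top_S_omega: "topspace S_omega = range fan_quot"
proof -
  have "range fan_quot \<in> Fam" unfolding Fam_iff by auto
  moreover have "\<forall>V\<in>Fam. V \<subseteq> range fan_quot" using Fam_iff by blast
  ultimately have "\<Union>Fam = range fan_quot" by blast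
  then show ?thesis unfolding S_omega_eq by simp
qed

lemma fq_range: "fan_quot (k, y) \<in> range fan_quot" by blast

lemma L_imp_S_omega:
  assumes T1: "t1_space X" and L: "L_selective X"
  shows "selective S_omega X"
  unfolding selective_def
proof (intro allI impI, elim conjE)
  fix \<phi> :: "nat \<times> enat \<Rightarrow> 'a set"
  assume lsc: "lsc_map S_omega X \<phi>" and cl: "\<forall>y\<in>topspace S_omega. closedin X (\<phi> y)"
  have vals: "\<And>z. z \<in> range fan_quot \<Longrightarrow> \<phi> z \<subseteq> topspace X \<and> \<phi> z \<noteq> {}"
    using lsc unfolding lsc_map_def top_S_omega by blast
  have op: "\<And>U. openin X U \<Longrightarrow> openin S_omega {z \<in> range fan_quot. \<phi> z \<inter> U \<noteq> {}}"
    using lsc unfolding lsc_map_def top_S_omega by blast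
  have r0: "(0::nat, \<infinity>) \<in> range fan_quot"
    by (rule range_eqI[where x="(0,\<infinity>)"]) (simp add: fan_quot_def)
  have "\<phi> (0, \<infinity>) \<noteq> {}" using vals[OF r0] by blast
  then obtain p where p: "p \<in> \<phi> (0, \<infinity>)" by blast
  have "\<forall>k. \<exists>f. continuous_map omega_plus_one X f \<and> (\<forall>y. f y \<in> \<phi> (fan_quot (k, y))) \<and> f \<infinity> = p"
  proof
    fix k
    have "lsc_map omega_plus_one X (\<lambda>y. \<phi> (fan_quot (k, y)))"
      unfolding lsc_enat_iff
    proof (intro conjI allI impI)
      fix y show "\<phi> (fan_quot (k, y)) \<subseteq> topspace X" "\<phi> (fan_quot (k, y)) \<noteq> {}"
        using vals fq_range by blast+
    next
      fix U assume "openin X U"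
      then have "open {y. fan_quot (k, y) \<in> {z \<in> range fan_quot. \<phi> z \<inter> U \<noteq> {}}}"
        using op S_omega_open_fwd by blast
      moreover have "{y. fan_quot (k, y) \<in> {z \<in> range fan_quot. \<phi> z \<inter> U \<noteq> {}}}
          = {y. \<phi> (fan_quot (k, y)) \<inter> U \<noteq> {}}" by blast
      ultimately show "open {y. \<phi> (fan_quot (k, y)) \<inter> U \<noteq> {}}" by simp
    qed
    moreover have "\<And>y. closedin X (\<phi> (fan_quot (k, y)))"
    proof -
      fix y
      have "fan_quot (k, y) \<in> topspace S_omega" unfolding top_S_omega by (rule fq_range)
      then show "closedin X (\<phi> (fan_quot (k, y)))" using cl by blast
    qed
    moreover have "p \<in> \<phi> (fan_quot (k, \<infinity>))" using p by (simp add: fan_quot_def)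
    ultimately show "\<exists>f. continuous_map omega_plus_one X f \<and> (\<forall>y. f y \<in> \<phi> (fan_quot (k, y))) \<and> f \<infinity> = p"
      by (rule L_sel_fixed[OF T1 L])
  qed
  then have "\<exists>F. \<forall>k. continuous_map omega_plus_one X (F k) \<and> (\<forall>y. F k y \<in> \<phi> (fan_quot (k, y))) \<and> F k \<infinity> = p"
    by (rule choice)
  then obtain F where F0: "\<forall>k. continuous_map omega_plus_one X (F k) \<and> (\<forall>y. F k y \<in> \<phi> (fan_quot (k, y))) \<and> F k \<infinity> = p"
    by blast
  have F: "\<And>k. continuous_map omega_plus_one X (F k)"
    "\<And>k y. F k y \<in> \<phi> (fan_quot (k, y))" "\<And>k. F k \<infinity> = p" using F0 by blast+
  define g where "g z = F (fst z) (snd z)" for z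
  have gq: "g (fan_quot (k, y)) = F k y" for k y
    using F(3) by (auto simp: g_def fan_quot_def)
  have "continuous_map S_omega X g"
    unfolding continuous_map_def Pi_iff top_S_omega
  proof (intro conjI allI impI ballI)
    fix z assume "z \<in> range fan_quot"
    then obtain k y where z: "z = fan_quot (k, y)" by auto
    have "F k y \<in> topspace X" using F(1)[of k] cont_enat_iff by blast
    then show "g z \<in> topspace X" using z gq by simp
  next
    fix U assume U: "openin X U"
    show "openin S_omega {z \<in> range fan_quot. g z \<in> U}"
    proof (rule S_omega_open_bwd)
      fix k
      have e: "{y. fan_quot (k, y) \<in> {z \<in> range fan_quot. g z \<in> U}} = {y. F k y \<in> U}"
      proof (rule Collect_cong)
        fix y
        have a: "fan_quot (k, y) \<in> range fan_quot" by (rule fq_range)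
        show "fan_quot (k, y) \<in> {z \<in> range fan_quot. g z \<in> U} \<longleftrightarrow> F k y \<in> U"
          unfolding mem_Collect_eq gq using a by blast
      qed
      have "open {y. F k y \<in> U}" using F(1)[of k] U cont_enat_iff by blast
      then show "open {y. fan_quot (k, y) \<in> {z \<in> range fan_quot. g z \<in> U}}"
        using e by simp
    qed blast
  qed
  moreover have "\<forall>z\<in>topspace S_omega. g z \<in> \<phi> z"
    unfolding top_S_omega using gq F(2) by auto
  ultimately show "\<exists>f. continuous_map S_omega X f \<and> (\<forall>y\<in>topspace S_omega. f y \<in> \<phi> y)" by blast
qed

lemma S_omega_imp_L:
  assumes S: "selective S_omega X"
  shows "L_selective X"
  unfolding L_selective_def selective_def
proof (intro allI impI, elim conjE)
  fix \<phi> :: "enat \<Rightarrow> 'a set"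
  assume lsc: "lsc_map omega_plus_one X \<phi>" and cl: "\<forall>y\<in>topspace omega_plus_one. closedin X (\<phi> y)"
  have vals: "\<forall>y. \<phi> y \<subseteq> topspace X \<and> \<phi> y \<noteq> {}"
   and op: "\<forall>U. openin X U \<longrightarrow> open {y. \<phi> y \<inter> U \<noteq> {}}" using lsc unfolding lsc_enat_iff by blast+
  have snd_fq: "snd (fan_quot (k, y)) = y" for k y by (simp add: fan_quot_def)
  have "lsc_map S_omega X (\<lambda>z. \<phi> (snd z))"
    unfolding lsc_map_def top_S_omega
  proof (intro conjI allI impI ballI)
    fix z show "\<phi> (snd z) \<subseteq> topspace X" "\<phi> (snd z) \<noteq> {}" using vals by blast+
  next
    fix U assume U: "openin X U"
    show "openin S_omega {y \<in> range fan_quot. \<phi> (snd y) \<inter> U \<noteq> {}}"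
    proof (rule S_omega_open_bwd)
      fix k
      have "{y. fan_quot (k, y) \<in> {y \<in> range fan_quot. \<phi> (snd y) \<inter> U \<noteq> {}}} = {y. \<phi> y \<inter> U \<noteq> {}}"
        by (simp add: snd_fq fq_range)
      then show "open {y. fan_quot (k, y) \<in> {y \<in> range fan_quot. \<phi> (snd y) \<inter> U \<noteq> {}}}"
        using op U by simp
    qed blast
  qed
  moreover have "\<forall>z\<in>topspace S_omega. closedin X (\<phi> (snd z))"
    using cl by (simp add: omega_plus_one_def)
  ultimately obtain g where g: "continuous_map S_omega X g" "\<forall>z\<in>topspace S_omega. g z \<in> \<phi> (snd z)"
    using S unfolding selective_def by blast
  have fq0: "fan_quot (0, y) = (0, y)" for y by (simp add: fan_quot_def)
  have inS: "(0::nat, y) \<in> topspace S_omega" for y unfolding top_S_omega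
    by (rule range_eqI[where x="(0,y)"]) (simp add: fan_quot_def)
  have c0: "continuous_map omega_plus_one S_omega (\<lambda>y. (0::nat, y))"
    unfolding continuous_map_def Pi_iff
  proof (intro conjI allI impI ballI)
    fix y show "(0::nat, y) \<in> topspace S_omega" by (rule inS)
  next
    fix V assume "openin S_omega V"
    then have "open {y. fan_quot (0, y) \<in> V}" by (rule S_omega_open_fwd)
    then show "openin omega_plus_one {x \<in> topspace omega_plus_one. (0, x) \<in> V}"
      by (simp add: fq0 omega_plus_one_def)
  qed
  have "continuous_map omega_plus_one X (\<lambda>y. g (0, y))"
    using continuous_map_compose[OF c0 g(1)] by (simp add: o_def)
  moreover have "\<forall>y\<in>topspace omega_plus_one. g (0, y) \<in> \<phi> y"
  proof
    fix y have "g (0, y) \<in> \<phi> (snd (0::nat, y))" using g(2) inS by blast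
    then show "g (0, y) \<in> \<phi> y" by simp
  qed
  ultimately show "\<exists>f. continuous_map omega_plus_one X f \<and> (\<forall>y\<in>topspace omega_plus_one. f y \<in> \<phi> y)"
    by blast
qed



definition sp :: "enat \<Rightarrow> S2pt" where
  "sp y = (case y of enat n \<Rightarrow> Xn n | \<infinity> \<Rightarrow> Xpt)"

definition fn :: "nat \<Rightarrow> enat \<Rightarrow> S2pt" where
  "fn n y = (case y of enat m \<Rightarrow> Xnm n m | \<infinity> \<Rightarrow> Xn n)"

lemma sp_simps[simp]: "sp (enat n) = Xn n" "sp \<infinity> = Xpt"
  by (simp_all add: sp_def)

lemma fn_simps[simp]: "fn n (enat m) = Xnm n m" "fn n \<infinity> = Xn n"
  by (simp_all add: fn_def)

lemma fin_tail: "finite (K::nat set) \<Longrightarrow> \<exists>N. \<forall>m\<ge>N. m \<notin> K"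
proof -
  assume "finite K"
  then obtain N where N: "K \<subseteq> {..<N}" using finite_nat_bounded by blast
  have "\<forall>m\<ge>N. m \<notin> K"
  proof (intro allI impI)
    fix m assume "m \<ge> N" then show "m \<notin> K" using N by auto
  qed
  then show ?thesis by blast
qed

lemma b1: "{Xnm n m} \<in> S2_nbhd_base"
  unfolding S2_nbhd_base_def by blast

lemma b2: "finite K \<Longrightarrow> insert (Xn n) {Xnm n m | m. m \<notin> K} \<in> S2_nbhd_base"
  unfolding S2_nbhd_base_def by blast

lemma b3: "finite K \<Longrightarrow>
   insert Xpt ({Xn n | n. n \<notin> K} \<union> {Xnm n m | n m. n \<notin> K \<and> m > f n}) \<in> S2_nbhd_base"
  unfolding S2_nbhd_base_def by blast

lemma base_cases:
  assumes "s \<in> S2_nbhd_base"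
  shows "(\<exists>a b. s = {Xnm a b}) \<or> (\<exists>a K. finite K \<and> s = insert (Xn a) {Xnm a m | m. m \<notin> K})
    \<or> (\<exists>K f. finite K \<and> s = insert Xpt ({Xn n | n. n \<notin> K} \<union> {Xnm n m | n m. n \<notin> K \<and> m > f n}))"
  using assms unfolding S2_nbhd_base_def
proof (elim UnE)
  assume "s \<in> {{Xnm n m} | n m. True}"
  then obtain a b where "s = {Xnm a b}" by blast
  then show ?thesis by (intro disjI1 exI)
next
  assume "s \<in> {insert (Xn n) {Xnm n m | m. m \<notin> K} | n K. finite K}"
  then obtain a K where "finite K" "s = insert (Xn a) {Xnm a m | m. m \<notin> K}" by blast
  then show ?thesis by (intro disjI2 disjI1 exI conjI)
next
  assume "s \<in> {insert Xpt ({Xn n | n. n \<notin> K} \<union> {Xnm n m | n m. n \<notin> K \<and> m > f n}) | K f. finite K}"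
  then obtain K f where "finite K" "s = insert Xpt ({Xn n | n. n \<notin> K} \<union> {Xnm n m | n m. n \<notin> K \<and> m > f n})" by blast
  then show ?thesis by (intro disjI2 exI conjI)
qed

lemma pre1: "open {y. sp y \<in> {Xnm a b}} \<and> open {y. fn k y \<in> {Xnm a b}}"
  unfolding enat_open_tail by simp

lemma pre2:
  assumes "finite K"
  shows "open {y. sp y \<in> insert (Xn a) {Xnm a m | m. m \<notin> K}} \<and>
         open {y. fn k y \<in> insert (Xn a) {Xnm a m | m. m \<notin> K}}"
proof
  show "open {y. sp y \<in> insert (Xn a) {Xnm a m | m. m \<notin> K}}"
    unfolding enat_open_tail by simp
  obtain N where N: "\<forall>m\<ge>N. m \<notin> K" using fin_tail[OF assms] by blast
  show "open {y. fn k y \<in> insert (Xn a) {Xnm a m | m. m \<notin> K}}"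
    unfolding enat_open_tail
  proof
    assume "\<infinity> \<in> {y. fn k y \<in> insert (Xn a) {Xnm a m | m. m \<notin> K}}"
    then have "k = a" by simp
    have "\<forall>n\<ge>N. enat n \<in> {y. fn k y \<in> insert (Xn a) {Xnm a m | m. m \<notin> K}}"
    proof (intro allI impI)
      fix n assume "n \<ge> N"
      then have "n \<notin> K" using N by blast
      then show "enat n \<in> {y. fn k y \<in> insert (Xn a) {Xnm a m | m. m \<notin> K}}"
        using \<open>k = a\<close> by simp
    qed
    then show "\<exists>N. \<forall>n\<ge>N. enat n \<in> {y. fn k y \<in> insert (Xn a) {Xnm a m | m. m \<notin> K}}" by blast
  qed
qed

lemma pre3:
  fixes f :: "nat \<Rightarrow> nat" and K :: "nat set"
  assumes "finite K"
  defines "s \<equiv> insert Xpt ({Xn n | n. n \<notin> K} \<union> {Xnm n m | n m. n \<notin> K \<and> m > f n})"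
  shows "open {y. sp y \<in> s} \<and> open {y. fn k y \<in> s}"
proof
  obtain N where N: "\<forall>m\<ge>N. m \<notin> K" using fin_tail[OF assms(1)] by blast
  show "open {y. sp y \<in> s}" unfolding enat_open_tail
  proof
    have "\<forall>n\<ge>N. enat n \<in> {y. sp y \<in> s}"
    proof (intro allI impI)
      fix n assume "n \<ge> N"
      then have "n \<notin> K" using N by blast
      then show "enat n \<in> {y. sp y \<in> s}" unfolding s_def by simp
    qed
    then show "\<exists>N. \<forall>n\<ge>N. enat n \<in> {y. sp y \<in> s}" by blast
  qed
  show "open {y. fn k y \<in> s}" unfolding enat_open_tail
  proof
    assume "\<infinity> \<in> {y. fn k y \<in> s}"
    then have "k \<notin> K" unfolding s_def by simp
    have "\<forall>n\<ge>Suc (f k). enat n \<in> {y. fn k y \<in> s}"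
    proof (intro allI impI)
      fix n assume "n \<ge> Suc (f k)"
      then show "enat n \<in> {y. fn k y \<in> s}" using \<open>k \<notin> K\<close> unfolding s_def by simp
    qed
    then show "\<exists>N. \<forall>n\<ge>N. enat n \<in> {y. fn k y \<in> s}" by blast
  qed
qed

lemma basis_pre:
  assumes "s \<in> S2_nbhd_base"
  shows "open {y. sp y \<in> s} \<and> open {y. fn k y \<in> s}"
  using base_cases[OF assms]
proof (elim disjE exE conjE)
  fix a b assume "s = {Xnm a b}" then show ?thesis using pre1 by simp
next
  fix a K assume "finite K" "s = insert (Xn a) {Xnm a m | m. m \<notin> K}"
  then show ?thesis using pre2 by simp
next
  fix K f assume "finite K" "s = insert Xpt ({Xn n | n. n \<notin> K} \<union> {Xnm n m | n m. n \<notin> K \<and> m > f n})"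
  then show ?thesis using pre3 by simp
qed

lemma S2_open_fwd:
  assumes "openin S2 V" shows "open {y. sp y \<in> V} \<and> open {y. fn k y \<in> V}"
proof -
  have "generate_topology_on S2_nbhd_base V"
    using assms unfolding S2_def openin_topology_generated_by_iff .
  then show ?thesis
  proof (induction rule: generate_topology_on.induct)
    case Empty then show ?case by simp
  next
    case (Int a b)
    have "{y. sp y \<in> a \<inter> b} = {y. sp y \<in> a} \<inter> {y. sp y \<in> b}"
         "{y. fn k y \<in> a \<inter> b} = {y. fn k y \<in> a} \<inter> {y. fn k y \<in> b}" by auto
    then show ?case using Int by (simp add: open_Int)
  next
    case (UN K)
    have "{y. sp y \<in> \<Union>K} = (\<Union>V\<in>K. {y. sp y \<in> V})"
         "{y. fn k y \<in> \<Union>K} = (\<Union>V\<in>K. {y. fn k y \<in> V})" by auto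
    then show ?case using UN by (simp add: open_UN)
  next
    case (Basis s) then show ?case using basis_pre by blast
  qed
qed

lemma S2_open_bwd:
  assumes "\<And>z. z \<in> W \<Longrightarrow> \<exists>B\<in>S2_nbhd_base. z \<in> B \<and> B \<subseteq> W"
  shows "openin S2 W"
proof -
  have e: "W = \<Union>{B \<in> S2_nbhd_base. B \<subseteq> W}" using assms by blast
  have "generate_topology_on S2_nbhd_base (\<Union>{B \<in> S2_nbhd_base. B \<subseteq> W})"
    by (rule generate_topology_on.UN) (auto intro: generate_topology_on.Basis)
  then show ?thesis unfolding S2_def openin_topology_generated_by_iff using e by simp
qed

lemma topS2: "topspace S2 = UNIV"
proof -
  have "z \<in> \<Union>S2_nbhd_base" for z
  proof (cases z)
    case Xpt
    then show ?thesis using b3[of "{}" "\<lambda>_. 0"] by blast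
  next
    case (Xn n)
    then show ?thesis using b2[of "{}" n] by blast
  next
    case (Xnm n m)
    then show ?thesis using b1[of n m] by blast
  qed
  then show ?thesis unfolding S2_def by auto
qed

lemma sp_cont: "continuous_map omega_plus_one S2 sp"
  unfolding continuous_map_def Pi_iff topS2 omega_plus_one_def
  using S2_open_fwd by simp

lemma lsc_pull:
  assumes "\<And>V. openin S2 V \<Longrightarrow> open {y. e y \<in> V}" and lsc: "lsc_map S2 X \<phi>"
  shows "lsc_map omega_plus_one X (\<lambda>y. \<phi> (e y))"
  unfolding lsc_enat_iff
proof (intro conjI allI impI)
  have vals: "\<And>z. \<phi> z \<subseteq> topspace X \<and> \<phi> z \<noteq> {}" using lsc unfolding lsc_map_def topS2 by blast
  fix y show "\<phi> (e y) \<subseteq> topspace X" "\<phi> (e y) \<noteq> {}" using vals by blast+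
next
  fix U assume "openin X U"
  then have "openin S2 {z. \<phi> z \<inter> U \<noteq> {}}" using lsc unfolding lsc_map_def topS2 by simp
  then have "open {y. e y \<in> {z. \<phi> z \<inter> U \<noteq> {}}}" using assms(1) by blast
  then show "open {y. \<phi> (e y) \<inter> U \<noteq> {}}" by simp
qed

lemma L_imp_S2:
  assumes T1: "t1_space X" and L: "L_selective X"
  shows "selective S2 X"
  unfolding selective_def
proof (intro allI impI, elim conjE)
  fix \<phi> :: "S2pt \<Rightarrow> 'a set"
  assume lsc: "lsc_map S2 X \<phi>" and cl: "\<forall>y\<in>topspace S2. closedin X (\<phi> y)"
  have cl': "\<And>z. closedin X (\<phi> z)" using cl topS2 by blast
  have vals: "\<And>z. \<phi> z \<subseteq> topspace X \<and> \<phi> z \<noteq> {}" using lsc unfolding lsc_map_def topS2 by blast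
  obtain p where p: "p \<in> \<phi> Xpt" using vals[of Xpt] by blast
  have lsp: "lsc_map omega_plus_one X (\<lambda>y. \<phi> (sp y))"
    by (rule lsc_pull[OF _ lsc]) (use S2_open_fwd in blast)
  have p': "p \<in> \<phi> (sp \<infinity>)" using p by simp
  obtain h where h0: "continuous_map omega_plus_one X h" "\<forall>y. h y \<in> \<phi> (sp y)" "h \<infinity> = p"
    using L_sel_fixed[OF T1 L lsp cl' p'] by blast
  have h: "continuous_map omega_plus_one X h" "\<And>y. h y \<in> \<phi> (sp y)" "h \<infinity> = p"
    using h0 by blast+
  have "\<forall>n. \<exists>f. continuous_map omega_plus_one X f \<and> (\<forall>y. f y \<in> \<phi> (fn n y)) \<and> f \<infinity> = h (enat n)"
  proof
    fix n
    have lfn: "lsc_map omega_plus_one X (\<lambda>y. \<phi> (fn n y))"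
      by (rule lsc_pull[OF _ lsc]) (use S2_open_fwd in blast)
    have "h (enat n) \<in> \<phi> (fn n \<infinity>)" using h(2)[of "enat n"] by simp
    then show "\<exists>f. continuous_map omega_plus_one X f \<and> (\<forall>y. f y \<in> \<phi> (fn n y)) \<and> f \<infinity> = h (enat n)"
      by (rule L_sel_fixed[OF T1 L lfn cl'])
  qed
  then have "\<exists>F. \<forall>n. continuous_map omega_plus_one X (F n) \<and> (\<forall>y. F n y \<in> \<phi> (fn n y)) \<and> F n \<infinity> = h (enat n)"
    by (rule choice)
  then obtain F where F0: "\<forall>n. continuous_map omega_plus_one X (F n) \<and> (\<forall>y. F n y \<in> \<phi> (fn n y)) \<and> F n \<infinity> = h (enat n)"
    by blast
  have F: "\<And>n. continuous_map omega_plus_one X (F n)"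
    "\<And>n y. F n y \<in> \<phi> (fn n y)" "\<And>n. F n \<infinity> = h (enat n)" using F0 by blast+
  define g where "g z = (case z of Xpt \<Rightarrow> p | Xn n \<Rightarrow> h (enat n) | Xnm n m \<Rightarrow> F n (enat m))" for z
  have g_simps: "g Xpt = p" "g (Xn n) = h (enat n)" "g (Xnm n m) = F n (enat m)" for n m
    by (simp_all add: g_def)
  have hX: "\<And>y. h y \<in> topspace X" using h(1) cont_enat_iff by blast
  have FX: "\<And>n y. F n y \<in> topspace X" using F(1) cont_enat_iff by blast
  have "continuous_map S2 X g"
    unfolding continuous_map_def Pi_iff topS2
  proof (intro conjI allI impI ballI)
    fix z :: S2pt show "g z \<in> topspace X"
      by (cases z) (use hX FX h(3) p vals in \<open>auto simp: g_simps\<close>)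
  next
    fix U assume U: "openin X U"
    show "openin S2 {z \<in> UNIV. g z \<in> U}"
    proof (rule S2_open_bwd)
      fix z assume z: "z \<in> {z \<in> UNIV. g z \<in> U}"
      show "\<exists>B\<in>S2_nbhd_base. z \<in> B \<and> B \<subseteq> {z \<in> UNIV. g z \<in> U}"
      proof (cases z)
        case Xpt
        then have "h \<infinity> \<in> U" using z h(3) by (simp add: g_simps)
        then obtain N where N: "\<forall>n\<ge>N. h (enat n) \<in> U" using cont_enat_tail[OF h(1) U] by blast
        have "\<forall>n. \<exists>M. n \<ge> N \<longrightarrow> (\<forall>m\<ge>M. F n (enat m) \<in> U)"
        proof
          fix n
          show "\<exists>M. n \<ge> N \<longrightarrow> (\<forall>m\<ge>M. F n (enat m) \<in> U)"
          proof (cases "n \<ge> N")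
            case True
            then have "F n \<infinity> \<in> U" using N F(3) by simp
            then show ?thesis using cont_enat_tail[OF F(1) U] by blast
          qed simp
        qed
        then have "\<exists>M. \<forall>n. n \<ge> N \<longrightarrow> (\<forall>m\<ge>M n. F n (enat m) \<in> U)" by (rule choice)
        then obtain M where M0: "\<forall>n. n \<ge> N \<longrightarrow> (\<forall>m\<ge>M n. F n (enat m) \<in> U)" by blast
        have M: "\<And>n m. n \<ge> N \<Longrightarrow> m \<ge> M n \<Longrightarrow> F n (enat m) \<in> U" using M0 by blast
        let ?B = "insert Xpt ({Xn n | n. n \<notin> {..<N}} \<union> {Xnm n m | n m. n \<notin> {..<N} \<and> m > M n})"
        have "?B \<in> S2_nbhd_base" by (rule b3) simp
        moreover have "?B \<subseteq> {z \<in> UNIV. g z \<in> U}"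
          using N M \<open>h \<infinity> \<in> U\<close> h(3) by (auto simp: g_simps)
        ultimately show ?thesis using Xpt by blast
      next
        case (Xn n)
        then have "F n \<infinity> \<in> U" using z F(3) by (simp add: g_simps)
        then obtain M where M: "\<forall>m\<ge>M. F n (enat m) \<in> U" using cont_enat_tail[OF F(1) U] by blast
        let ?B = "insert (Xn n) {Xnm n m | m. m \<notin> {..<M}}"
        have "?B \<in> S2_nbhd_base" by (rule b2) simp
        moreover have "?B \<subseteq> {z \<in> UNIV. g z \<in> U}"
          using M z Xn by (auto simp: g_simps)
        ultimately show ?thesis using Xn by blast
      next
        case (Xnm n m)
        then show ?thesis using b1[of n m] z by blast
      qed
    qed
  qed
  moreover have "\<forall>z\<in>topspace S2. g z \<in> \<phi> z"
  proof
    fix z show "g z \<in> \<phi> z"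
    proof (cases z)
      case Xpt then show ?thesis using p by (simp add: g_simps)
    next
      case (Xn n) then show ?thesis using h(2)[of "enat n"] by (simp add: g_simps)
    next
      case (Xnm n m) then show ?thesis using F(2)[of n "enat m"] by (simp add: g_simps)
    qed
  qed
  ultimately show "\<exists>f. continuous_map S2 X f \<and> (\<forall>y\<in>topspace S2. f y \<in> \<phi> y)" by blast
qed

definition rr :: "S2pt \<Rightarrow> enat" where
  "rr z = (case z of Xpt \<Rightarrow> \<infinity> | Xn n \<Rightarrow> enat n | Xnm n m \<Rightarrow> enat n)"

lemma rr_simps[simp]: "rr Xpt = \<infinity>" "rr (Xn n) = enat n" "rr (Xnm n m) = enat n"
  by (simp_all add: rr_def)

lemma rr_sp: "rr (sp y) = y" by (cases y) auto

lemma S2_imp_L: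
  assumes S: "selective S2 X"
  shows "L_selective X"
  unfolding L_selective_def selective_def
proof (intro allI impI, elim conjE)
  fix \<phi> :: "enat \<Rightarrow> 'a set"
  assume lsc: "lsc_map omega_plus_one X \<phi>" and cl: "\<forall>y\<in>topspace omega_plus_one. closedin X (\<phi> y)"
  have vals: "\<forall>y. \<phi> y \<subseteq> topspace X \<and> \<phi> y \<noteq> {}"
   and op: "\<forall>U. openin X U \<longrightarrow> open {y. \<phi> y \<inter> U \<noteq> {}}" using lsc unfolding lsc_enat_iff by blast+
  have "lsc_map S2 X (\<lambda>z. \<phi> (rr z))"
    unfolding lsc_map_def topS2
  proof (intro conjI allI impI ballI)
    fix z show "\<phi> (rr z) \<subseteq> topspace X" "\<phi> (rr z) \<noteq> {}" using vals by blast+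
  next
    fix U assume U: "openin X U"
    have o: "open {y. \<phi> y \<inter> U \<noteq> {}}" using op U by blast
    show "openin S2 {y \<in> UNIV. \<phi> (rr y) \<inter> U \<noteq> {}}"
    proof (rule S2_open_bwd)
      fix z assume z: "z \<in> {y \<in> UNIV. \<phi> (rr y) \<inter> U \<noteq> {}}"
      show "\<exists>B\<in>S2_nbhd_base. z \<in> B \<and> B \<subseteq> {y \<in> UNIV. \<phi> (rr y) \<inter> U \<noteq> {}}"
      proof (cases z)
        case Xpt
        then have "\<infinity> \<in> {y. \<phi> y \<inter> U \<noteq> {}}" using z by simp
        then obtain N where N: "\<forall>n\<ge>N. \<phi> (enat n) \<inter> U \<noteq> {}" using o unfolding enat_open_tail by blast
        let ?B = "insert Xpt ({Xn n | n. n \<notin> {..<N}} \<union> {Xnm n m | n m. n \<notin> {..<N} \<and> m > (\<lambda>_. 0) n})"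
        have "?B \<in> S2_nbhd_base" by (rule b3) simp
        moreover have "?B \<subseteq> {y \<in> UNIV. \<phi> (rr y) \<inter> U \<noteq> {}}"
          using N z Xpt by auto
        ultimately show ?thesis using Xpt by blast
      next
        case (Xn n)
        let ?B = "insert (Xn n) {Xnm n m | m. m \<notin> {}}"
        have "?B \<in> S2_nbhd_base" by (rule b2) simp
        moreover have "?B \<subseteq> {y \<in> UNIV. \<phi> (rr y) \<inter> U \<noteq> {}}"
          using z Xn by auto
        ultimately show ?thesis using Xn by blast
      next
        case (Xnm n m)
        then show ?thesis using b1[of n m] z by blast
      qed
    qed
  qed
  moreover have "\<forall>z\<in>topspace S2. closedin X (\<phi> (rr z))"
    using cl by (simp add: omega_plus_one_def)
  ultimately obtain g where g: "continuous_map S2 X g" "\<forall>z\<in>topspace S2. g z \<in> \<phi> (rr z)"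
    using S unfolding selective_def by blast
  have "continuous_map omega_plus_one X (\<lambda>y. g (sp y))"
    using continuous_map_compose[OF sp_cont g(1)] by (simp add: o_def)
  moreover have "\<forall>y\<in>topspace omega_plus_one. g (sp y) \<in> \<phi> y"
  proof
    fix y have "g (sp y) \<in> \<phi> (rr (sp y))" using g(2) topS2 by blast
    then show "g (sp y) \<in> \<phi> y" by (simp add: rr_sp)
  qed
  ultimately show "\<exists>f. continuous_map omega_plus_one X f \<and> (\<forall>y\<in>topspace omega_plus_one. f y \<in> \<phi> y)"
    by blast
qed


theorem mainTheorem16:
  fixes X :: "'a topology"
  assumes "t1_space X"
  shows "(L_selective X \<longleftrightarrow> selective S2 X) \<and> (selective S2 X \<longleftrightarrow> selective S_omega X)"
proof -
  have a: "L_selective X \<longleftrightarrow> selective S2 X"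
    using L_imp_S2[OF assms] S2_imp_L by blast
  have b: "L_selective X \<longleftrightarrow> selective S_omega X"
    using L_imp_S_omega[OF assms] S_omega_imp_L by blast
  show ?thesis using a b by blast
qed

end
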